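(* Let $R$ be a finite local Frobenius ring which is not a field, with a fixed primitive additive character $\psi$, and let $\tau$ be any multiplicative character of $R$. Then $$\sum_{a\in R^\times}|K_\tau(a)|^2=\begin{cases}|R|\,|R^\times| & \text{if }\tau\text{ is non-primitive},\\ 2|R|\,|R^\times|-|R|^2 & \text{if }\tau\text{ is primitive}.\end{cases}$$
   Context: All rings are finite and commutative with identity; $R^\times$ is the unit group; $M$ is the maximal ideal. An additive character $(R,+)\to\mathbb{C}^*$ is primitive if the only ideal on which it is identically $1$ is $(0)$; $R$ is Frobenius if such a character exists. A multiplicative character is a homomorphism $R^\times\to\mathbb{C}^*$; its conductor is $R$ if it is trivial, and otherwise the largest ideal $I\subseteq M$ such that it is identically $1$ on $1+I$; it is primitive if its conductor is $(0)$. $K_\tau(a)=\sum_{u\in R^\times}\tau(u)\psi(u+au^{-1})$. *)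

theory Defs
  imports Complex_Main
begin

text \<open>Finite commutative rings are modelled by a type of class comm_ring_1 and finite.\<close>

definition ring_ideal :: "'a::comm_ring_1 set \<Rightarrow> bool" where
  "ring_ideal I \<longleftrightarrow> 0 \<in> I \<and> (\<forall>x\<in>I. \<forall>y\<in>I. x + y \<in> I) \<and> (\<forall>r. \<forall>x\<in>I. r * x \<in> I)"

definition maximal_ideal :: "'a::comm_ring_1 set \<Rightarrow> bool" where
  "maximal_ideal I \<longleftrightarrow> ring_ideal I \<and> I \<noteq> UNIV \<and>
     (\<forall>J. ring_ideal J \<and> I \<subseteq> J \<longrightarrow> J = I \<or> J = UNIV)"

definition local_ring :: "'a::comm_ring_1 itself \<Rightarrow> bool" where
  "local_ring _ \<longleftrightarrow> (\<exists>!M::'a set. maximal_ideal M)"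

definition the_max_ideal :: "'a::comm_ring_1 set" where
  "the_max_ideal = (THE M. maximal_ideal M)"

definition units :: "'a::comm_ring_1 set" where
  "units = {u. u dvd 1}"

definition unit_inv :: "'a::comm_ring_1 \<Rightarrow> 'a" where
  "unit_inv u = (THE v. u * v = 1)"

definition is_field_ring :: "'a::comm_ring_1 itself \<Rightarrow> bool" where
  "is_field_ring _ \<longleftrightarrow> (0::'a) \<noteq> 1 \<and> (\<forall>x::'a. x \<noteq> 0 \<longrightarrow> x dvd 1)"

definition add_char :: "('a::comm_ring_1 \<Rightarrow> complex) \<Rightarrow> bool" where
  "add_char \<psi> \<longleftrightarrow> (\<forall>x. \<psi> x \<noteq> 0) \<and> (\<forall>x y. \<psi> (x + y) = \<psi> x * \<psi> y)"

definition primitive_add_char :: "('a::comm_ring_1 \<Rightarrow> complex) \<Rightarrow> bool" where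
  "primitive_add_char \<psi> \<longleftrightarrow> add_char \<psi> \<and>
     (\<forall>I. ring_ideal I \<and> (\<forall>x\<in>I. \<psi> x = 1) \<longrightarrow> I = {0})"

text \<open>A multiplicative character: a homomorphism from the unit group to the nonzero complex
  numbers; only its values on units are relevant.\<close>
definition mult_char :: "('a::comm_ring_1 \<Rightarrow> complex) \<Rightarrow> bool" where
  "mult_char \<tau> \<longleftrightarrow> (\<forall>u\<in>units. \<tau> u \<noteq> 0) \<and> (\<forall>u\<in>units. \<forall>v\<in>units. \<tau> (u * v) = \<tau> u * \<tau> v)"

definition trivial_mult_char :: "('a::comm_ring_1 \<Rightarrow> complex) \<Rightarrow> bool" where
  "trivial_mult_char \<tau> \<longleftrightarrow> (\<forall>u\<in>units. \<tau> u = 1)"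

definition conductor :: "('a::comm_ring_1 \<Rightarrow> complex) \<Rightarrow> 'a set" where
  "conductor \<tau> = (if trivial_mult_char \<tau> then UNIV
     else (GREATEST I. ring_ideal I \<and> I \<subseteq> the_max_ideal \<and> (\<forall>x\<in>I. \<tau> (1 + x) = 1)))"

definition primitive_mult_char :: "('a::comm_ring_1 \<Rightarrow> complex) \<Rightarrow> bool" where
  "primitive_mult_char \<tau> \<longleftrightarrow> conductor \<tau> = {0}"

definition kloosterman :: "('a::comm_ring_1 \<Rightarrow> complex) \<Rightarrow> ('a \<Rightarrow> complex) \<Rightarrow> 'a \<Rightarrow> complex" where
  "kloosterman \<tau> \<psi> a = (\<Sum>u\<in>units. \<tau> u * \<psi> (u + a * unit_inv u))"

end

theory Submission
  imports Defs
begin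

definition ann :: "'a::comm_ring_1 set \<Rightarrow> 'a set" where
  "ann I = {s. \<forall>m\<in>I. m * s = 0}"

lemma ideal_zero: "ring_ideal I \<Longrightarrow> 0 \<in> I" by (simp add: ring_ideal_def)
lemma ideal_add: "ring_ideal I \<Longrightarrow> x \<in> I \<Longrightarrow> y \<in> I \<Longrightarrow> x + y \<in> I" by (simp add: ring_ideal_def)
lemma ideal_lmult: "ring_ideal I \<Longrightarrow> x \<in> I \<Longrightarrow> r * x \<in> I" by (simp add: ring_ideal_def)
lemma ideal_rmult: "ring_ideal I \<Longrightarrow> x \<in> I \<Longrightarrow> x * r \<in> I" by (simp add: ring_ideal_def mult.commute)
lemma ideal_neg: "ring_ideal I \<Longrightarrow> x \<in> I \<Longrightarrow> -x \<in> I"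
  using ideal_lmult[of I x "-1"] by simp
lemma ideal_diff: "ring_ideal I \<Longrightarrow> x \<in> I \<Longrightarrow> y \<in> I \<Longrightarrow> x - y \<in> I"
  using ideal_add[of I x "-y"] ideal_neg[of I y] by simp
lemma ideal_UNIV: "ring_ideal UNIV" by (simp add: ring_ideal_def)

lemma ann_ideal: "ring_ideal (ann I)"
  unfolding ring_ideal_def ann_def by (auto simp: distrib_left mult.left_commute)

lemma units_iff: "u \<in> units \<longleftrightarrow> (\<exists>v. u * v = 1)"
  unfolding units_def dvd_def mem_Collect_eq by (rule iffI; elim exE; rule exI; erule sym)

lemma unit_inv: assumes "u \<in> units" shows "u * unit_inv u = 1"
proof -
  obtain v where v: "u * v = 1" using assms units_iff by blast
  have "\<exists>!v. u * v = 1"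
  proof
    show "u * v = 1" by (rule v)
    fix w assume "u * w = 1"
    then have "v * (u * w) = v" by simp
    also have "v * (u * w) = (u * v) * w" by (simp add: ac_simps)
    finally show "w = v" using v by simp
  qed
  then show ?thesis unfolding unit_inv_def by (rule theI')
qed

lemma unit_inv': "u \<in> units \<Longrightarrow> unit_inv u * u = 1"
  using unit_inv by (metis mult.commute)

lemma unit_inv_units: "u \<in> units \<Longrightarrow> unit_inv u \<in> units"
  using unit_inv' units_iff by blast

lemma units_mult: "u \<in> units \<Longrightarrow> v \<in> units \<Longrightarrow> u * v \<in> units"
  unfolding units_def using mult_dvd_mono[of u 1 v 1] by simp

lemma one_units: "1 \<in> units" by (simp add: units_def)

lemma root_unity_cnj:
  fixes z :: complex
  assumes "z ^ n = 1" "n > 0" shows "cnj z * z = 1"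
proof -
  have "norm z = 1" using power_eq_1_iff[OF assms(1)] assms(2) by auto
  then have "of_real ((norm z)\<^sup>2) = (1::complex)" by simp
  then show ?thesis using complex_norm_square[of z] by (simp add: mult.commute)
qed

lemma psi0: "add_char \<psi> \<Longrightarrow> \<psi> 0 = 1"
proof -
  assume a: "add_char \<psi>"
  then have "\<psi> 0 = \<psi> 0 * \<psi> 0" "\<psi> 0 \<noteq> 0" unfolding add_char_def by (metis add_0)+
  then show ?thesis by simp
qed

lemma psi_add: "add_char \<psi> \<Longrightarrow> \<psi> (x + y) = \<psi> x * \<psi> y" by (simp add: add_char_def)

lemma psi_neg: "add_char \<psi> \<Longrightarrow> \<psi> (-x) * \<psi> x = 1"
  using psi_add[of \<psi> "-x" x] psi0[of \<psi>] by simp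

lemma psi_pow: assumes "add_char (\<psi>::'a::{comm_ring_1,finite} \<Rightarrow> complex)"
  shows "\<psi> x ^ card (UNIV::'a set) = 1"
proof -
  have b: "bij_betw (\<lambda>a. a + x) UNIV UNIV"
    by (rule bij_betw_byWitness[where f'="\<lambda>a. a - x"]) auto
  have "(\<Prod>a\<in>UNIV. \<psi> (a + x)) = (\<Prod>a\<in>UNIV. \<psi> a)"
    using prod.reindex_bij_betw[OF b, of \<psi>] by simp
  moreover have "(\<Prod>a\<in>UNIV. \<psi> (a + x)) = \<psi> x ^ card (UNIV::'a set) * (\<Prod>a\<in>UNIV. \<psi> a)"
    using psi_add[OF assms] by (simp add: prod.distrib mult.commute)
  moreover have "(\<Prod>a\<in>UNIV. \<psi> a) \<noteq> 0" using assms by (simp add: add_char_def)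
  ultimately show ?thesis by simp
qed

lemma psi_cnj: assumes "add_char (\<psi>::'a::{comm_ring_1,finite} \<Rightarrow> complex)"
  shows "cnj (\<psi> x) = \<psi> (-x)"
proof -
  have "cnj (\<psi> x) * \<psi> x = 1" by (rule root_unity_cnj[OF psi_pow[OF assms]]) (simp add: finite_UNIV_card_ge_0)
  moreover have "\<psi> (-x) * \<psi> x = 1" by (rule psi_neg[OF assms])
  moreover have "\<psi> x \<noteq> 0" using assms by (simp add: add_char_def)
  ultimately show ?thesis by (metis mult_right_cancel)
qed

lemma psi_sum_ideal:
  fixes \<psi> :: "'a::{comm_ring_1,finite} \<Rightarrow> complex"
  assumes "add_char \<psi>" "ring_ideal (I::'a set)"
  shows "(\<Sum>a\<in>I. \<psi> (a*c)) = (if \<forall>a\<in>I. \<psi> (a*c) = 1 then of_nat (card I) else 0)"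
proof (cases "\<forall>a\<in>I. \<psi> (a*c) = 1")
  case True then show ?thesis by simp
next
  case False
  then obtain b where b: "b \<in> I" "\<psi> (b*c) \<noteq> 1" by blast
  have bij: "bij_betw (\<lambda>a. a + b) I I"
    by (rule bij_betw_byWitness[where f'="\<lambda>a. a - b"]) (auto intro: ideal_add ideal_diff assms b)
  have "(\<Sum>a\<in>I. \<psi> (a*c)) = (\<Sum>a\<in>I. \<psi> ((a+b)*c))"
    using sum.reindex_bij_betw[OF bij, of "\<lambda>a. \<psi> (a*c)"] by simp
  also have "\<dots> = (\<Sum>a\<in>I. \<psi> (a*c) * \<psi> (b*c))"
    by (rule sum.cong) (simp_all add: distrib_right psi_add[OF assms(1)])
  also have "\<dots> = \<psi> (b*c) * (\<Sum>a\<in>I. \<psi> (a*c))"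
    by (simp only: mult.commute[of "\<psi> (b*c)"] sum_distrib_right)
  finally have "(1 - \<psi> (b*c)) * (\<Sum>a\<in>I. \<psi> (a*c)) = 0" by (simp add: algebra_simps)
  then have "(\<Sum>a\<in>I. \<psi> (a*c)) = 0" using b by simp
  then show ?thesis using False by auto
qed

lemma psi_triv_iff:
  fixes \<psi> :: "'a::{comm_ring_1,finite} \<Rightarrow> complex"
  assumes "primitive_add_char \<psi>" "ring_ideal (I::'a set)"
  shows "(\<forall>a\<in>I. \<psi> (a*c) = 1) \<longleftrightarrow> c \<in> ann I"
proof
  assume h: "\<forall>a\<in>I. \<psi> (a*c) = 1"
  have id: "ring_ideal ((\<lambda>a. a*c) ` I)"
    unfolding ring_ideal_def
  proof (intro conjI ballI allI)
    show "0 \<in> (\<lambda>a. a*c) ` I" using ideal_zero[OF assms(2)] by force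
  next
    fix x y assume "x \<in> (\<lambda>a. a*c) ` I" "y \<in> (\<lambda>a. a*c) ` I"
    then obtain a b where "a \<in> I" "b \<in> I" "x = a*c" "y = b*c" by auto
    then show "x + y \<in> (\<lambda>a. a*c) ` I" using ideal_add[OF assms(2)]
      by (metis distrib_right image_eqI)
  next
    fix r x assume "x \<in> (\<lambda>a. a*c) ` I"
    then obtain a where "a \<in> I" "x = a*c" by auto
    then show "r * x \<in> (\<lambda>a. a*c) ` I" using ideal_lmult[OF assms(2)]
      by (metis mult.assoc image_eqI)
  qed
  have "(\<lambda>a. a*c) ` I = {0}" using assms(1) id h unfolding primitive_add_char_def by blast
  then show "c \<in> ann I" unfolding ann_def by auto
next
  assume "c \<in> ann I"
  then show "\<forall>a\<in>I. \<psi> (a*c) = 1" using psi0[of \<psi>] assms(1)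
    unfolding ann_def primitive_add_char_def by auto
qed

lemma ann_UNIV: "ann UNIV = {0}" unfolding ann_def by auto (metis mult_1_left)

lemma card_ann:
  fixes \<psi> :: "'a::{comm_ring_1,finite} \<Rightarrow> complex"
  assumes "primitive_add_char \<psi>" "ring_ideal (I::'a set)"
  shows "card I * card (ann I) = card (UNIV::'a set)"
proof -
  have ac: "add_char \<psi>" using assms(1) by (simp add: primitive_add_char_def)
  have "(\<Sum>c\<in>UNIV. \<Sum>a\<in>I. \<psi> (a*c)) = (\<Sum>c\<in>UNIV. if c \<in> ann I then of_nat (card I) else 0)"
    using psi_sum_ideal[OF ac assms(2)] psi_triv_iff[OF assms] by simp
  also have "\<dots> = of_nat (card I * card (ann I))"
    by (simp add: sum.If_cases)
  finally have 1: "(\<Sum>c\<in>UNIV. \<Sum>a\<in>I. \<psi> (a*c)) = of_nat (card I * card (ann I))" .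
  have "(\<Sum>a\<in>I. \<Sum>c\<in>UNIV. \<psi> (c*a)) = (\<Sum>a\<in>I. if a \<in> ann UNIV then of_nat (card (UNIV::'a set)) else 0)"
    using psi_sum_ideal[OF ac ideal_UNIV] psi_triv_iff[OF assms(1) ideal_UNIV] by simp
  also have "\<dots> = of_nat (card (UNIV::'a set))"
    using ideal_zero[OF assms(2)] by (simp add: ann_UNIV sum.If_cases Int_absorb1)
  finally have 2: "(\<Sum>a\<in>I. \<Sum>c\<in>UNIV. \<psi> (c*a)) = of_nat (card (UNIV::'a set))" .
  have "(\<Sum>c\<in>UNIV. \<Sum>a\<in>I. \<psi> (a*c)) = (\<Sum>a\<in>I. \<Sum>c\<in>UNIV. \<psi> (c*a))"
    by (subst sum.swap) (simp add: mult.commute)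
  then have "(of_nat (card I * card (ann I)) :: complex) = of_nat (card (UNIV::'a set))" using 1 2 by simp
  then show ?thesis by (simp only: of_nat_eq_iff)
qed

lemma ann_mono: "I \<subseteq> J \<Longrightarrow> ann J \<subseteq> ann I" unfolding ann_def by auto

lemma ann_ann:
  fixes \<psi> :: "'a::{comm_ring_1,finite} \<Rightarrow> complex"
  assumes "primitive_add_char \<psi>" "ring_ideal (I::'a set)"
  shows "ann (ann I) = I"
proof -
  have sub: "I \<subseteq> ann (ann I)" unfolding ann_def by (auto simp: mult.commute)
  have "card (ann I) * card (ann (ann I)) = card (UNIV::'a set)" by (rule card_ann[OF assms(1) ann_ideal])
  moreover have "card I * card (ann I) = card (UNIV::'a set)" by (rule card_ann[OF assms])
  moreover have "card (ann I) > 0" using ideal_zero[OF ann_ideal, of I] by (metis card_gt_0_iff empty_iff finite)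
  ultimately have "card (ann (ann I)) = card I" by (metis mult.commute mult_left_cancel not_gr0)
  then show ?thesis using sub by (metis card_subset_eq finite)
qed


lemma exists_max:
  fixes I :: "'a::{comm_ring_1,finite} set"
  assumes "ring_ideal I" "I \<noteq> UNIV"
  shows "\<exists>J. maximal_ideal J \<and> I \<subseteq> J"
proof -
  let ?S = "{J. ring_ideal J \<and> J \<noteq> UNIV \<and> I \<subseteq> J}"
  have f: "finite ?S" by (rule finite_subset[of _ UNIV]) simp_all
  have ne: "?S \<noteq> {}" using assms by blast
  from finite_has_maximal[OF f ne] obtain m where m: "m \<in> ?S" "\<forall>b\<in>?S. m \<le> b \<longrightarrow> m = b"
    by (elim bexE) (rule that)
  have "maximal_ideal m" unfolding maximal_ideal_def
  proof (intro conjI allI impI)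
    show "ring_ideal m" "m \<noteq> UNIV" using m(1) by simp_all
    fix J assume J: "ring_ideal J \<and> m \<subseteq> J"
    show "J = m \<or> J = UNIV"
    proof (cases "J = UNIV")
      case False
      then have "J \<in> ?S" using J m(1) by auto
      then show ?thesis using m(2) J by auto
    qed simp
  qed
  then show ?thesis using m(1) by auto
qed

lemma M_max:
  assumes "local_ring TYPE('a::{comm_ring_1,finite})"
  shows "maximal_ideal (the_max_ideal :: 'a set)"
  using assms unfolding local_ring_def the_max_ideal_def by (rule theI')

lemma M_eq:
  assumes "local_ring TYPE('a::{comm_ring_1,finite})"
  shows "(the_max_ideal :: 'a set) = - units"
proof
  have mx: "maximal_ideal (the_max_ideal :: 'a set)" by (rule M_max[OF assms])
  show "(the_max_ideal :: 'a set) \<subseteq> - units"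
  proof
    fix x :: 'a assume x: "x \<in> the_max_ideal"
    show "x \<in> - units"
    proof
      assume "x \<in> units"
      then obtain v where v: "x * v = 1" using units_iff by blast
      have "\<forall>r. r \<in> (the_max_ideal :: 'a set)"
      proof
        fix r :: 'a
        have "(r * v) * x \<in> the_max_ideal" using mx x ideal_lmult unfolding maximal_ideal_def by blast
        then show "r \<in> the_max_ideal" using v by (simp add: mult.assoc mult.commute[of v x])
      qed
      then show False using mx unfolding maximal_ideal_def by blast
    qed
  qed
  show "- units \<subseteq> (the_max_ideal :: 'a set)"
  proof
    fix x :: 'a assume x: "x \<in> - units"
    let ?I = "range (\<lambda>r. x * r)"
    have id: "ring_ideal ?I" unfolding ring_ideal_def
      by (auto simp: distrib_left[symmetric]; metis mult_zero_right mult.left_commute rangeI)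
    have "1 \<notin> ?I"
    proof
      assume "1 \<in> ?I"
      then obtain r where "1 = x * r" by auto
      then have "x \<in> units" using units_iff by metis
      with x show False by simp
    qed
    then have "?I \<noteq> UNIV" by blast
    then obtain J where J: "maximal_ideal J" "?I \<subseteq> J" using exists_max[OF id] by blast
    have "J = the_max_ideal" using assms J(1) mx unfolding local_ring_def by blast
    moreover have "x \<in> ?I" by (metis mult_1_right rangeI)
    ultimately show "x \<in> the_max_ideal" using J by blast
  qed
qed

locale kl =
  fixes \<psi> \<tau> :: "'a::{comm_ring_1,finite} \<Rightarrow> complex"
  assumes loc: "local_ring TYPE('a)"
    and nf: "\<not> is_field_ring TYPE('a)"
    and pa: "primitive_add_char \<psi>"
    and mc: "mult_char \<tau>"
begin

abbreviation M :: "'a set" where "M \<equiv> the_max_ideal"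
abbreviation A :: "'a set" where "A \<equiv> ann M"

lemma ac: "add_char \<psi>" using pa by (simp add: primitive_add_char_def)

lemma Meq: "M = - units" by (rule M_eq[OF loc])
lemma M_ideal: "ring_ideal M" using M_max[OF loc] by (simp add: maximal_ideal_def)
lemma M_ne: "M \<noteq> UNIV" using M_max[OF loc] by (simp add: maximal_ideal_def)
lemma inM: "x \<in> M \<longleftrightarrow> x \<notin> units" using Meq by auto

lemma zero_ne_one: "(0::'a) \<noteq> 1"
proof
  assume h: "(0::'a) = 1"
  have "\<forall>x::'a. x = 0" by (metis h mult_1_right mult_zero_right)
  then have "M = UNIV" using ideal_zero[OF M_ideal] by (metis UNIV_eq_I)
  then show False using M_ne by simp
qed

lemma unit_add: "u \<in> units \<Longrightarrow> m \<in> M \<Longrightarrow> u + m \<in> units"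
proof (rule ccontr)
  assume u: "u \<in> units" and m: "m \<in> M" and n: "u + m \<notin> units"
  then have "u + m \<in> M" using inM by blast
  then have "(u + m) - m \<in> M" using ideal_diff[OF M_ideal] m by blast
  then show False using u inM by simp
qed

lemma A_ideal: "ring_ideal A" by (rule ann_ideal)

lemma A_sub: "A \<subseteq> M"
proof
  fix s assume s: "s \<in> A"
  show "s \<in> M"
  proof (rule ccontr)
    assume "s \<notin> M"
    then obtain w where w: "s * w = 1" using inM units_iff by blast
    have M0: "M = {0}"
    proof -
      have "m = 0" if "m \<in> M" for m
      proof -
        have "m * s = 0" using s that by (simp add: ann_def)
        then have "m * s * w = 0" by simp
        then show "m = 0" using w by (simp add: mult.assoc)
      qed
      then show ?thesis using ideal_zero[OF M_ideal] by blast
    qed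
    have "is_field_ring TYPE('a)" unfolding is_field_ring_def
      using zero_ne_one M0 inM units_def by auto
    then show False using nf by simp
  qed
qed

lemma MA: "m \<in> M \<Longrightarrow> s \<in> A \<Longrightarrow> m * s = 0" by (simp add: ann_def)

lemma ann_ann': "ring_ideal (I::'a set) \<Longrightarrow> ann (ann I) = I" by (rule ann_ann[OF pa])

lemma A_ne: "A \<noteq> {0}"
proof
  assume "A = {0}"
  then have "ann A = UNIV" by (simp add: ann_def)
  then show False using ann_ann'[OF M_ideal] M_ne by simp
qed

lemma A_min: assumes "ring_ideal (I::'a set)" "I \<noteq> {0}" shows "A \<subseteq> I"
proof -
  have "ann I \<subseteq> M"
  proof
    fix x assume x: "x \<in> ann I"
    show "x \<in> M"
    proof (rule ccontr)
      assume "x \<notin> M"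
      then obtain w where w: "x * w = 1" using inM units_iff by blast
      have "1 \<in> ann I" using ideal_lmult[OF ann_ideal x, of w] w by (simp add: mult.commute)
      then have "I \<subseteq> {0}" by (auto simp: ann_def)
      then show False using assms ideal_zero by blast
    qed
  qed
  then have "ann M \<subseteq> ann (ann I)" by (rule ann_mono)
  then show ?thesis using ann_ann'[OF assms(1)] by simp
qed

lemma card_MA: "card M * card A = card (UNIV::'a set)"
  by (rule card_ann[OF pa M_ideal])

lemma card_M: "card M = card (UNIV::'a set) - card (units::'a set)"
proof -
  have "M = UNIV - units" using Meq by auto
  then show ?thesis using card_Diff_subset[of "units::'a set" UNIV] by simp
qed

lemma tau_mult: "u \<in> units \<Longrightarrow> v \<in> units \<Longrightarrow> \<tau> (u * v) = \<tau> u * \<tau> v"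
  using mc by (simp add: mult_char_def)
lemma tau_nz: "u \<in> units \<Longrightarrow> \<tau> u \<noteq> 0"
  using mc by (simp add: mult_char_def)

lemma tau1: "\<tau> 1 = 1"
  using tau_mult[OF one_units one_units] tau_nz[OF one_units] by simp

lemma tau_pow: assumes "v \<in> units" shows "\<tau> v ^ card (units::'a set) = 1"
proof -
  have b: "bij_betw (\<lambda>a. a * v) units units"
    by (rule bij_betw_byWitness[where f'="\<lambda>a. a * unit_inv v"])
      (auto simp: mult.assoc unit_inv[OF assms] unit_inv'[OF assms] intro: units_mult assms unit_inv_units)
  have "(\<Prod>a\<in>units. \<tau> (a * v)) = (\<Prod>a\<in>units. \<tau> a)"
    using prod.reindex_bij_betw[OF b, of \<tau>] by simp
  moreover have "(\<Prod>a\<in>units. \<tau> (a * v)) = \<tau> v ^ card (units::'a set) * (\<Prod>a\<in>units. \<tau> a)"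
    using tau_mult assms by (simp add: prod.distrib mult.commute)
  moreover have "(\<Prod>a\<in>units. \<tau> a) \<noteq> 0" using tau_nz by simp
  ultimately show ?thesis by simp
qed

lemma tau_cnj: assumes "u \<in> units" shows "cnj (\<tau> u) * \<tau> u = 1"
proof -
  have "card (units::'a set) > 0" using one_units by (metis card_gt_0_iff empty_iff finite)
  then show ?thesis using root_unity_cnj[OF tau_pow[OF assms]] by simp
qed

end

context kl begin

definition P :: "'a set \<Rightarrow> bool" where
  "P I \<longleftrightarrow> ring_ideal I \<and> I \<subseteq> M \<and> (\<forall>x\<in>I. \<tau> (1 + x) = 1)"

lemma P_sum:
  assumes "P I" "P J"
  shows "P {x + y | x y. x \<in> I \<and> y \<in> J}"
proof -
  have I: "ring_ideal I" "I \<subseteq> M" "\<forall>x\<in>I. \<tau> (1 + x) = 1" using assms(1) by (auto simp: P_def)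
  have J: "ring_ideal J" "J \<subseteq> M" "\<forall>x\<in>J. \<tau> (1 + x) = 1" using assms(2) by (auto simp: P_def)
  let ?S = "{x + y | x y. x \<in> I \<and> y \<in> J}"
  have id: "ring_ideal ?S" unfolding ring_ideal_def
  proof (intro conjI ballI allI)
    show "0 \<in> ?S" using ideal_zero[OF I(1)] ideal_zero[OF J(1)] by force
  next
    fix a b assume "a \<in> ?S" "b \<in> ?S"
    then obtain x y x' y' where "x \<in> I" "y \<in> J" "x' \<in> I" "y' \<in> J" "a = x + y" "b = x' + y'" by auto
    then show "a + b \<in> ?S"
      using ideal_add[OF I(1), of x x'] ideal_add[OF J(1), of y y']
      by (intro CollectI exI[of _ "x + x'"] exI[of _ "y + y'"] conjI) (simp_all add: algebra_simps)
  next
    fix r a assume "a \<in> ?S"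
    then obtain x y where "x \<in> I" "y \<in> J" "a = x + y" by auto
    then show "r * a \<in> ?S"
      using ideal_lmult[OF I(1), of x r] ideal_lmult[OF J(1), of y r]
      by (intro CollectI exI[of _ "r * x"] exI[of _ "r * y"] conjI) (simp_all add: algebra_simps)
  qed
  have sub: "?S \<subseteq> M" using I(2) J(2) ideal_add[OF M_ideal] by auto
  have tr: "\<tau> (1 + z) = 1" if zS: "z \<in> ?S" for z
  proof -
    obtain x y where xy: "x \<in> I" "y \<in> J" "z = x + y" using zS by auto
    have u: "1 + x \<in> units" using unit_add[OF one_units] xy I(2) by blast
    define w where "w = unit_inv (1 + x)"
    have wy: "w * y \<in> J" using ideal_lmult[OF J(1) xy(2)] by simp
    have u2: "1 + w * y \<in> units" using unit_add[OF one_units] wy J(2) by blast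
    have "(1 + x) * (1 + w * y) = 1 + x + ((1 + x) * w) * y" by (simp add: algebra_simps)
    also have "\<dots> = 1 + z" using unit_inv[OF u] xy by (simp add: w_def)
    finally have "\<tau> (1 + z) = \<tau> (1 + x) * \<tau> (1 + w * y)" using tau_mult[OF u u2] by simp
    then show ?thesis using I(3) J(3) xy wy by simp
  qed
  show ?thesis using id sub tr by (simp add: P_def)
qed

lemma greatest_ex: "\<exists>I. P I \<and> (\<forall>J. P J \<longrightarrow> J \<subseteq> I)"
proof -
  have P0: "P {0}" unfolding P_def using ideal_zero[OF M_ideal] tau1
    by (simp add: ring_ideal_def)
  have "finite {I. P I}" by simp
  moreover have "{I. P I} \<noteq> {}" using P0 by blast
  ultimately obtain m where m: "P m" "\<forall>b\<in>{I. P I}. m \<le> b \<longrightarrow> m = b"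
    using finite_has_maximal[of "{I. P I}"] by blast
  have "J \<subseteq> m" if "P J" for J
  proof -
    let ?S = "{x + y | x y. x \<in> m \<and> y \<in> J}"
    have "P ?S" by (rule P_sum[OF m(1) that])
    moreover have "m \<subseteq> ?S" using ideal_zero[of J] that unfolding P_def by force
    ultimately have "m = ?S" using m(2) by blast
    moreover have "J \<subseteq> ?S" using ideal_zero[of m] m(1) unfolding P_def by force
    ultimately show ?thesis by simp
  qed
  then show ?thesis using m(1) by blast
qed

lemma conductor_eq: "\<not> trivial_mult_char \<tau> \<Longrightarrow> conductor \<tau> = Greatest P"
  unfolding conductor_def P_def[abs_def] by simp

lemma prim_iff: "primitive_mult_char \<tau> \<longleftrightarrow> \<not> (\<forall>s\<in>A. \<tau> (1 + s) = 1)"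
proof
  assume pr: "primitive_mult_char \<tau>"
  show "\<not> (\<forall>s\<in>A. \<tau> (1 + s) = 1)"
  proof
    assume tr: "\<forall>s\<in>A. \<tau> (1 + s) = 1"
    show False
    proof (cases "trivial_mult_char \<tau>")
      case True
      then have "conductor \<tau> = UNIV" by (simp add: conductor_def)
      then have "(1::'a) \<in> {0}" using pr by (simp add: primitive_mult_char_def)
      then show False using zero_ne_one by simp
    next
      case False
      obtain I where I: "P I" "\<forall>J. P J \<longrightarrow> J \<subseteq> I" using greatest_ex by auto
      have "Greatest P = I" by (rule Greatest_equality) (use I in auto)
      then have c: "conductor \<tau> = I" using conductor_eq[OF False] by simp
      have "P A" unfolding P_def using A_ideal A_sub tr by simp
      then have "A \<subseteq> I" using I(2) by simp
      moreover have "I = {0}" using c pr by (simp add: primitive_mult_char_def)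
      ultimately have "A = {0}" using ideal_zero[OF A_ideal] by auto
      then show False using A_ne by simp
    qed
  qed
next
  assume "\<not> (\<forall>s\<in>A. \<tau> (1 + s) = 1)"
  then obtain s0 where s0: "s0 \<in> A" "\<tau> (1 + s0) \<noteq> 1" by auto
  have "s0 \<in> M" using s0(1) A_sub by (rule subsetD[rotated])
  then have "1 + s0 \<in> units" by (rule unit_add[OF one_units])
  then have nt: "\<not> trivial_mult_char \<tau>" using s0 by (auto simp: trivial_mult_char_def)
  have PI: "P I \<Longrightarrow> I = {0}" for I
  proof (rule ccontr)
    assume "P I" "I \<noteq> {0}"
    then have "A \<subseteq> I" using A_min by (simp add: P_def)
    then show False using \<open>P I\<close> s0 by (auto simp: P_def)
  qed
  have P0: "P {0}" unfolding P_def using ideal_zero[OF M_ideal] tau1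
    by (simp add: ring_ideal_def)
  have "Greatest P = {0}" by (rule Greatest_equality[where P=P, OF P0]) (drule PI, simp)
  then show "primitive_mult_char \<tau>" using conductor_eq[OF nt] by (simp add: primitive_mult_char_def)
qed

lemma T_sum: "(\<Sum>s\<in>A. \<tau> (1 + s)) = (if \<forall>s\<in>A. \<tau> (1 + s) = 1 then of_nat (card A) else 0)"
proof (cases "\<forall>s\<in>A. \<tau> (1 + s) = 1")
  case True then show ?thesis by simp
next
  case False
  then obtain b where b: "b \<in> A" "\<tau> (1 + b) \<noteq> 1" by blast
  have bij: "bij_betw (\<lambda>a. a + b) A A"
    by (rule bij_betw_byWitness[where f'="\<lambda>a. a - b"]) (auto intro: ideal_add ideal_diff A_ideal b)
  have "(\<Sum>a\<in>A. \<tau> (1 + a)) = (\<Sum>a\<in>A. \<tau> (1 + (a + b)))"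
    using sum.reindex_bij_betw[OF bij, of "\<lambda>a. \<tau> (1 + a)"] by simp
  also have "\<dots> = (\<Sum>a\<in>A. \<tau> (1 + a) * \<tau> (1 + b))"
  proof (rule sum.cong)
    fix a assume a: "a \<in> A"
    have "(1 + a) * (1 + b) = 1 + (a + b) + a * b" by (simp add: algebra_simps)
    moreover have "a * b = 0" using MA[OF _ b(1)] a A_sub by blast
    ultimately have "(1 + a) * (1 + b) = 1 + (a + b)" by simp
    moreover have "1 + a \<in> units" "1 + b \<in> units" using unit_add[OF one_units] a b A_sub by blast+
    ultimately show "\<tau> (1 + (a + b)) = \<tau> (1 + a) * \<tau> (1 + b)" using tau_mult by metis
  qed simp
  also have "\<dots> = \<tau> (1 + b) * (\<Sum>a\<in>A. \<tau> (1 + a))"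
    by (simp only: mult.commute[of "\<tau> (1 + b)"] sum_distrib_right)
  finally have "(1 - \<tau> (1 + b)) * (\<Sum>a\<in>A. \<tau> (1 + a)) = 0" by (simp add: algebra_simps)
  then have "(\<Sum>a\<in>A. \<tau> (1 + a)) = 0" using b by simp
  then show ?thesis using False by auto
qed

lemma S_sum: "(\<Sum>a\<in>units. \<psi> (a * c)) =
   (if c = 0 then of_nat (card (UNIV::'a set)) else 0) - (if c \<in> A then of_nat (card M) else 0)"
proof -
  have "units = UNIV - M" using Meq by auto
  then have "(\<Sum>a\<in>units. \<psi> (a * c)) = (\<Sum>a\<in>UNIV. \<psi> (a * c)) - (\<Sum>a\<in>M. \<psi> (a * c))"
    using sum_diff[of UNIV M "\<lambda>a. \<psi> (a * c)"] by simp
  also have "(\<Sum>a\<in>UNIV. \<psi> (a * c)) = (if c = 0 then of_nat (card (UNIV::'a set)) else 0)"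
    using psi_sum_ideal[OF ac ideal_UNIV, of c] psi_triv_iff[OF pa ideal_UNIV, of c] unfolding ann_UNIV by simp
  also have "(\<Sum>a\<in>M. \<psi> (a * c)) = (if c \<in> A then of_nat (card M) else 0)"
    using psi_sum_ideal[OF ac M_ideal] psi_triv_iff[OF pa M_ideal] by simp
  finally show ?thesis .
qed

end

context kl begin

definition F :: "'a \<Rightarrow> 'a \<Rightarrow> complex" where
  "F u v = \<tau> u * cnj (\<tau> v) * \<psi> (u - v)"

lemma psi_sub: "\<psi> x * \<psi> (-y) = \<psi> (x - y)"
  using psi_add[OF ac, of x "-y"] by simp

lemma K_sq: "kloosterman \<tau> \<psi> a * cnj (kloosterman \<tau> \<psi> a) =
   (\<Sum>u\<in>units. \<Sum>v\<in>units. F u v * \<psi> (a * (unit_inv u - unit_inv v)))"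
proof -
  have "kloosterman \<tau> \<psi> a * cnj (kloosterman \<tau> \<psi> a) =
     (\<Sum>u\<in>units. \<Sum>v\<in>units. (\<tau> u * \<psi> (u + a * unit_inv u)) * (cnj (\<tau> v) * \<psi> (-(v + a * unit_inv v))))"
    unfolding kloosterman_def by (simp add: sum_product psi_cnj[OF ac])
  also have "\<dots> = (\<Sum>u\<in>units. \<Sum>v\<in>units. F u v * \<psi> (a * (unit_inv u - unit_inv v)))"
  proof (intro sum.cong refl)
    fix u v
    have "\<psi> (u + a * unit_inv u) * \<psi> (-(v + a * unit_inv v)) = \<psi> ((u - v) + a * (unit_inv u - unit_inv v))"
      by (simp only: psi_sub) (rule arg_cong[where f=\<psi>], simp add: algebra_simps)
    also have "\<dots> = \<psi> (u - v) * \<psi> (a * (unit_inv u - unit_inv v))" by (rule psi_add[OF ac])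
    finally show "(\<tau> u * \<psi> (u + a * unit_inv u)) * (cnj (\<tau> v) * \<psi> (-(v + a * unit_inv v))) =
        F u v * \<psi> (a * (unit_inv u - unit_inv v))"
      unfolding F_def by (simp add: ac_simps)
  qed
  finally show ?thesis .
qed

lemma inv_eq: assumes "u \<in> units" "v \<in> units"
  shows "unit_inv u - unit_inv v = 0 \<longleftrightarrow> u = v"
proof
  assume "unit_inv u - unit_inv v = 0"
  then have e: "unit_inv u = unit_inv v" by simp
  have "u = u * (v * unit_inv v)" using unit_inv[OF assms(2)] by simp
  also have "\<dots> = v * (u * unit_inv u)" using e by (simp add: ac_simps)
  also have "\<dots> = v" using unit_inv[OF assms(1)] by simp
  finally show "u = v" .
qed simp

lemma inv_A: assumes "u \<in> units" "v \<in> units"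
  shows "unit_inv u - unit_inv v \<in> A \<longleftrightarrow> v - u \<in> A"
proof -
  have e1: "unit_inv u - unit_inv v = (unit_inv u * unit_inv v) * (v - u)"
  proof -
    have "(unit_inv u * unit_inv v) * (v - u) = unit_inv u * (unit_inv v * v) - unit_inv v * (unit_inv u * u)"
      by (simp add: algebra_simps)
    then show ?thesis using unit_inv'[OF assms(1)] unit_inv'[OF assms(2)] by simp
  qed
  have e2: "v - u = (u * v) * (unit_inv u - unit_inv v)"
  proof -
    have "(u * v) * (unit_inv u - unit_inv v) = v * (u * unit_inv u) - u * (v * unit_inv v)"
      by (simp add: algebra_simps)
    then show ?thesis using unit_inv[OF assms(1)] unit_inv[OF assms(2)] by simp
  qed
  show ?thesis using e1 e2 ideal_lmult[OF A_ideal] by metis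
qed

lemma F_diag: "u \<in> units \<Longrightarrow> F u u = 1"
  unfolding F_def using tau_cnj psi0[OF ac] by (simp add: mult.commute)

lemma G_eq: assumes u: "u \<in> units"
  shows "(\<Sum>v\<in>units. if v - u \<in> A then F u v else 0) = (\<Sum>s\<in>A. cnj (\<tau> (1 + s)) * \<psi> (u * (-s)))"
proof -
  let ?V = "{v\<in>units. v - u \<in> A}"
  have "(\<Sum>v\<in>units. if v - u \<in> A then F u v else 0) = (\<Sum>v\<in>?V. F u v)"
    by (simp add: sum.inter_filter)
  also have "\<dots> = (\<Sum>s\<in>A. F u (u * (1 + s)))"
  proof -
    have b: "bij_betw (\<lambda>s. u * (1 + s)) A ?V"
    proof (rule bij_betw_byWitness[where f'="\<lambda>v. unit_inv u * (v - u)"])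
      show "\<forall>s\<in>A. unit_inv u * (u * (1 + s) - u) = s"
        using unit_inv'[OF u] by (simp add: algebra_simps flip: mult.assoc)
      show "\<forall>v\<in>?V. u * (1 + unit_inv u * (v - u)) = v"
        using unit_inv[OF u] by (simp add: algebra_simps flip: mult.assoc)
      show "(\<lambda>s. u * (1 + s)) ` A \<subseteq> ?V"
      proof
        fix x assume "x \<in> (\<lambda>s. u * (1 + s)) ` A"
        then obtain s where s: "s \<in> A" "x = u * (1 + s)" by auto
        have "1 + s \<in> units" using unit_add[OF one_units] s A_sub by blast
        then have "x \<in> units" using units_mult[OF u] s by simp
        moreover have "x - u = u * s" using s by (simp add: algebra_simps)
        ultimately show "x \<in> ?V" using ideal_lmult[OF A_ideal s(1)] by simp
      qed
      show "(\<lambda>v. unit_inv u * (v - u)) ` ?V \<subseteq> A"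
        using ideal_lmult[OF A_ideal] by auto
    qed
    show ?thesis using sum.reindex_bij_betw[OF b, of "F u"] by simp
  qed
  also have "\<dots> = (\<Sum>s\<in>A. cnj (\<tau> (1 + s)) * \<psi> (u * (-s)))"
  proof (rule sum.cong[OF refl])
    fix s assume s: "s \<in> A"
    have "1 + s \<in> units" using unit_add[OF one_units] s A_sub by blast
    then have "\<tau> (u * (1 + s)) = \<tau> u * \<tau> (1 + s)" using tau_mult[OF u] by simp
    moreover have "u - u * (1 + s) = u * (-s)" by (simp add: algebra_simps)
    ultimately have "F u (u * (1 + s)) = (cnj (\<tau> u) * \<tau> u) * cnj (\<tau> (1 + s)) * \<psi> (u * (-s))"
      unfolding F_def by (simp add: ac_simps)
    then show "F u (u * (1 + s)) = cnj (\<tau> (1 + s)) * \<psi> (u * (-s))" using tau_cnj[OF u] by simp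
  qed
  finally show ?thesis .
qed

end

context kl begin

definition G :: "'a \<Rightarrow> complex" where
  "G u = (\<Sum>v\<in>units. if v - u \<in> A then F u v else 0)"

lemma inner_u: assumes u: "u \<in> units"
  shows "(\<Sum>v\<in>units. F u v * (\<Sum>a\<in>units. \<psi> (a * (unit_inv u - unit_inv v)))) =
     of_nat (card (UNIV::'a set)) - of_nat (card M) * G u"
proof -
  have "(\<Sum>v\<in>units. F u v * (\<Sum>a\<in>units. \<psi> (a * (unit_inv u - unit_inv v)))) =
     (\<Sum>v\<in>units. (if u = v then of_nat (card (UNIV::'a set)) * F u v else 0) -
        of_nat (card M) * (if v - u \<in> A then F u v else 0))"
  proof (rule sum.cong[OF refl])
    fix v :: 'a assume v: "v \<in> units"
    have h: "(\<Sum>a\<in>units. \<psi> (a * (unit_inv u - unit_inv v))) =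
      (if u = v then of_nat (card (UNIV::'a set)) else 0) - (if v - u \<in> A then of_nat (card M) else 0)"
      by (simp only: S_sum inv_eq[OF u v] inv_A[OF u v])
    show "F u v * (\<Sum>a\<in>units. \<psi> (a * (unit_inv u - unit_inv v))) =
       (if u = v then of_nat (card (UNIV::'a set)) * F u v else 0) -
        of_nat (card M) * (if v - u \<in> A then F u v else 0)"
      unfolding h by (cases "u = v"; cases "v - u \<in> A") (simp_all add: algebra_simps)
  qed
  also have "\<dots> = (\<Sum>v\<in>units. (if u = v then of_nat (card (UNIV::'a set)) * F u v else 0)) -
        of_nat (card M) * G u"
    unfolding G_def by (simp add: sum_subtractf sum_distrib_left)
  also have "(\<Sum>v\<in>units. (if u = v then of_nat (card (UNIV::'a set)) * F u v else 0)) =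
       of_nat (card (UNIV::'a set))"
    using u F_diag[OF u] by simp
  finally show ?thesis .
qed

lemma sum_G: "(\<Sum>u\<in>units. G u) = of_nat (card (UNIV::'a set)) - of_nat (card M) * cnj (\<Sum>s\<in>A. \<tau> (1 + s))"
proof -
  have "(\<Sum>u\<in>units. G u) = (\<Sum>u\<in>units. \<Sum>s\<in>A. cnj (\<tau> (1 + s)) * \<psi> (u * (-s)))"
    unfolding G_def by (rule sum.cong[OF refl]) (rule G_eq)
  also have "\<dots> = (\<Sum>s\<in>A. \<Sum>u\<in>units. cnj (\<tau> (1 + s)) * \<psi> (u * (-s)))"
    by (rule sum.swap)
  also have "\<dots> = (\<Sum>s\<in>A. cnj (\<tau> (1 + s)) * ((if s = 0 then of_nat (card (UNIV::'a set)) else 0) - of_nat (card M)))"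
  proof (rule sum.cong[OF refl])
    fix s :: 'a assume s: "s \<in> A"
    have "-s \<in> A" using ideal_neg[OF A_ideal s] .
    then have "(\<Sum>u\<in>units. \<psi> (u * (-s))) = (if s = 0 then of_nat (card (UNIV::'a set)) else 0) - of_nat (card M)"
      using S_sum[of "-s"] by simp
    then show "(\<Sum>u\<in>units. cnj (\<tau> (1 + s)) * \<psi> (u * (-s))) =
        cnj (\<tau> (1 + s)) * ((if s = 0 then of_nat (card (UNIV::'a set)) else 0) - of_nat (card M))"
      by (simp add: sum_distrib_left[symmetric])
  qed
  also have "\<dots> = (\<Sum>s\<in>A. (if s = 0 then of_nat (card (UNIV::'a set)) * cnj (\<tau> (1 + s)) else 0)) -
       of_nat (card M) * (\<Sum>s\<in>A. cnj (\<tau> (1 + s)))"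
  proof -
    have "(\<Sum>s\<in>A. cnj (\<tau> (1 + s)) * ((if s = 0 then of_nat (card (UNIV::'a set)) else 0) - of_nat (card M))) =
       (\<Sum>s\<in>A. (if s = 0 then of_nat (card (UNIV::'a set)) * cnj (\<tau> (1 + s)) else 0) - of_nat (card M) * cnj (\<tau> (1 + s)))"
      by (rule sum.cong[OF refl]) (simp add: algebra_simps)
    also have "\<dots> = (\<Sum>s\<in>A. (if s = 0 then of_nat (card (UNIV::'a set)) * cnj (\<tau> (1 + s)) else 0)) -
       (\<Sum>s\<in>A. of_nat (card M) * cnj (\<tau> (1 + s)))"
      by (rule sum_subtractf)
    finally show ?thesis by (simp only: sum_distrib_left)
  qed
  also have "(\<Sum>s\<in>A. (if s = 0 then of_nat (card (UNIV::'a set)) * cnj (\<tau> (1 + s)) else 0)) =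
      of_nat (card (UNIV::'a set))"
    using ideal_zero[OF A_ideal] tau1 by simp
  finally show ?thesis by simp
qed

lemma main_sum:
  "(\<Sum>a\<in>units. kloosterman \<tau> \<psi> a * cnj (kloosterman \<tau> \<psi> a)) =
    of_nat (card (UNIV::'a set)) * of_nat (card (units::'a set)) -
    of_nat (card M) * (of_nat (card (UNIV::'a set)) - of_nat (card M) * cnj (\<Sum>s\<in>A. \<tau> (1 + s)))"
proof -
  have "(\<Sum>a\<in>units. kloosterman \<tau> \<psi> a * cnj (kloosterman \<tau> \<psi> a)) =
     (\<Sum>a\<in>units. \<Sum>u\<in>units. \<Sum>v\<in>units. F u v * \<psi> (a * (unit_inv u - unit_inv v)))"
    by (rule sum.cong[OF refl]) (rule K_sq)
  also have "\<dots> = (\<Sum>u\<in>units. \<Sum>a\<in>units. \<Sum>v\<in>units. F u v * \<psi> (a * (unit_inv u - unit_inv v)))"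
    by (rule sum.swap)
  also have "\<dots> = (\<Sum>u\<in>units. \<Sum>v\<in>units. \<Sum>a\<in>units. F u v * \<psi> (a * (unit_inv u - unit_inv v)))"
    by (rule sum.cong[OF refl]) (rule sum.swap)
  also have "\<dots> = (\<Sum>u\<in>units. \<Sum>v\<in>units. F u v * (\<Sum>a\<in>units. \<psi> (a * (unit_inv u - unit_inv v))))"
    by (simp add: sum_distrib_left)
  also have "\<dots> = (\<Sum>u\<in>units. of_nat (card (UNIV::'a set)) - of_nat (card M) * G u)"
    by (rule sum.cong[OF refl]) (rule inner_u)
  also have "\<dots> = of_nat (card (UNIV::'a set)) * of_nat (card (units::'a set)) - of_nat (card M) * (\<Sum>u\<in>units. G u)"
    by (simp add: sum_subtractf sum_distrib_left mult.commute)
  finally show ?thesis unfolding sum_G .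
qed

end

theorem mainTheorem7:
  fixes \<psi> \<tau> :: "'a::{comm_ring_1,finite} \<Rightarrow> complex"
  assumes "local_ring TYPE('a)"
    and "\<not> is_field_ring TYPE('a)"
    and "primitive_add_char \<psi>"
    and "mult_char \<tau>"
  shows "(\<Sum>a\<in>(units::'a set). (cmod (kloosterman \<tau> \<psi> a))\<^sup>2) =
     (if primitive_mult_char \<tau>
      then 2 * real (card (UNIV::'a set)) * real (card (units::'a set)) - real (card (UNIV::'a set))^2
      else real (card (UNIV::'a set)) * real (card (units::'a set)))"
proof -
  interpret kl \<psi> \<tau> using assms by unfold_locales
  define R where "R = card (UNIV::'a set)"
  define U where "U = card (units::'a set)"
  define Mc where "Mc = card M"
  define t :: real where "t = (if \<forall>s\<in>A. \<tau> (1 + s) = 1 then real (card A) else 0)"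
  have T: "cnj (\<Sum>s\<in>A. \<tau> (1 + s)) = complex_of_real t"
    unfolding T_sum t_def by simp
  have "complex_of_real (\<Sum>a\<in>(units::'a set). (cmod (kloosterman \<tau> \<psi> a))\<^sup>2) =
      (\<Sum>a\<in>units. kloosterman \<tau> \<psi> a * cnj (kloosterman \<tau> \<psi> a))"
    unfolding of_real_sum by (rule sum.cong[OF refl]) (rule complex_norm_square)
  also have "\<dots> = complex_of_real (real R * real U - real Mc * (real R - real Mc * t))"
    unfolding main_sum T R_def U_def Mc_def by simp
  finally have L: "(\<Sum>a\<in>(units::'a set). (cmod (kloosterman \<tau> \<psi> a))\<^sup>2) =
       real R * real U - real Mc * (real R - real Mc * t)"
    by (simp only: of_real_eq_iff)
  have MA': "real Mc * real (card A) = real R"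
    using card_MA unfolding Mc_def R_def by (metis of_nat_mult)
  have UR: "U \<le> R" unfolding U_def R_def by (rule card_mono) simp_all
  have Mc': "real Mc = real R - real U" using card_M UR unfolding Mc_def R_def U_def by simp
  show ?thesis
  proof (cases "primitive_mult_char \<tau>")
    case True
    then have "\<not> (\<forall>s\<in>A. \<tau> (1 + s) = 1)" using prim_iff by simp
    then have "t = 0" unfolding t_def by (simp only: if_False)
    then show ?thesis using L True Mc' unfolding R_def U_def by (simp add: algebra_simps power2_eq_square)
  next
    case False
    then have "t = real (card A)" using prim_iff unfolding t_def by simp
    then have "real Mc * (real R - real Mc * t) = 0" using MA' by (simp add: algebra_simps)
    then show ?thesis using L False unfolding R_def U_def by simp
  qed
qed

end
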